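(* Let $\{(\mathcal{X}_i,\mathring{\mathcal{X}}_i,p_i)\}_{i\in\mathcal{I}}$ be $B$-$B$-bimodules with specified projections with reduced free product $(\mathcal{X},\mathring{\mathcal{X}},p)$, and set $\mathcal{A}=\mathcal{L}(\mathcal{X})$, $\mathbb{E}=\mathbb{E}_{\mathcal{L}(\mathcal{X})}$, $\mathcal{A}_{i,\mathcal{F}}=\lambda_i(\mathcal{L}(\mathcal{X}_i))$, $\mathcal{A}_{i,\mathcal{B}}=P_i\lambda_i(\mathcal{L}(\mathcal{X}_i))P_i$. Let $\omega:[n]\to\mathcal{I}$, $\chi:[n]\to\{\mathcal{F},\mathcal{B}\}$ and $a_k\in\mathcal{A}_{\omega(k),\chi(k)}$. If $\chi(n)=\mathcal{B}$, then there exists $T\in\mathcal{A}_{\omega(n),\mathcal{F}}$ such that $\mathbb{E}(a_1\cdots a_n)=\mathbb{E}(a_1\cdots a_{n-1}T)$.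
   Context: $B$ is a unital complex algebra. A $B$-$B$-bimodule with specified projection is a triple $(\mathcal{X},\mathring{\mathcal{X}},p)$ with $\mathcal{X}=B\oplus\mathring{\mathcal{X}}$ a direct sum of $B$-$B$-bimodules and $p(b\oplus\eta)=b$; $\mathcal{L}(\mathcal{X})$ is the algebra of linear operators on $\mathcal{X}$ respecting the bimodule structure and $\mathbb{E}_{\mathcal{L}(\mathcal{X})}(T)=p(T(1_B\oplus0))$. The reduced free product of $\{(\mathcal{X}_i,\mathring{\mathcal{X}}_i,p_i)\}$ is $\mathcal{X}=B\oplus\mathring{\mathcal{X}}$ with $\mathring{\mathcal{X}}=\bigoplus_{n\ge1}\bigoplus_{i_1\ne\cdots\ne i_n}\mathring{\mathcal{X}}_{i_1}\otimes_B\cdots\otimes_B\mathring{\mathcal{X}}_{i_n}$ (consecutive indices distinct) and $p$ the projection onto $B$. For $i\in\mathcal{I}$, $\mathcal{X}(i)=B\oplus\bigoplus_{n\ge1}\bigoplus_{i_1\ne\cdots\ne i_n,\ i_1\ne i}\mathring{\mathcal{X}}_{i_1}\otimes_B\cdots\otimes_B\mathring{\mathcal{X}}_{i_n}$, $V_i:\mathcal{X}\to\mathcal{X}_i\otimes_B\mathcal{X}(i)$ is the natural isomorphism, $\lambda_i(T)=V_i^{-1}(T\otimes I)V_i$ for $T\in\mathcal{L}(\mathcal{X}_i)$, and $P_i$ is the projection of $\mathcal{X}$ onto the summand $B\oplus\mathring{\mathcal{X}}_i$ (zero on all other summands). *)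

theory Defs
  imports Complex_Main
begin

text \<open>A unital complex algebra is modelled as a type 'b of class ring_1 together with a
unital ring homomorphism sc from the complex numbers into the centre of B
(complex scalar multiplication z.b is sc z * b).\<close>

definition complex_alg :: "(complex \<Rightarrow> 'b::ring_1) \<Rightarrow> bool" where
  "complex_alg sc \<longleftrightarrow> sc 1 = 1 \<and> (\<forall>z w. sc (z + w) = sc z + sc w) \<and>
     (\<forall>z w. sc (z * w) = sc z * sc w) \<and> (\<forall>z b. sc z * b = b * sc z)"

text \<open>A B-B-bimodule (the complement part of a bimodule with specified projection):
carrier, zero, addition, left and right B-actions.  Complex scalar multiplication
is the action of sc z (which must agree on both sides).\<close>

record ('b, 'x) bimod =
  carr :: "'x set"
  zer  :: 'x
  addx :: "'x \<Rightarrow> 'x \<Rightarrow> 'x"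
  lact :: "'b \<Rightarrow> 'x \<Rightarrow> 'x"
  ract :: "'x \<Rightarrow> 'b \<Rightarrow> 'x"

definition bimodule :: "(complex \<Rightarrow> 'b::ring_1) \<Rightarrow> ('b, 'x) bimod \<Rightarrow> bool" where
  "bimodule sc M \<longleftrightarrow>
     zer M \<in> carr M \<and>
     (\<forall>x\<in>carr M. \<forall>y\<in>carr M. addx M x y \<in> carr M) \<and>
     (\<forall>x\<in>carr M. \<forall>y\<in>carr M. \<forall>z\<in>carr M. addx M (addx M x y) z = addx M x (addx M y z)) \<and>
     (\<forall>x\<in>carr M. \<forall>y\<in>carr M. addx M x y = addx M y x) \<and>
     (\<forall>x\<in>carr M. addx M (zer M) x = x) \<and>
     (\<forall>x\<in>carr M. \<exists>y\<in>carr M. addx M x y = zer M) \<and>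
     (\<forall>b. \<forall>x\<in>carr M. lact M b x \<in> carr M \<and> ract M x b \<in> carr M) \<and>
     (\<forall>x\<in>carr M. lact M 1 x = x \<and> ract M x 1 = x) \<and>
     (\<forall>b c. \<forall>x\<in>carr M. lact M (b * c) x = lact M b (lact M c x)) \<and>
     (\<forall>b c. \<forall>x\<in>carr M. ract M x (b * c) = ract M (ract M x b) c) \<and>
     (\<forall>b c. \<forall>x\<in>carr M. lact M (b + c) x = addx M (lact M b x) (lact M c x)) \<and>
     (\<forall>b c. \<forall>x\<in>carr M. ract M x (b + c) = addx M (ract M x b) (ract M x c)) \<and>
     (\<forall>b. \<forall>x\<in>carr M. \<forall>y\<in>carr M. lact M b (addx M x y) = addx M (lact M b x) (lact M b y)) \<and>
     (\<forall>b. \<forall>x\<in>carr M. \<forall>y\<in>carr M. ract M (addx M x y) b = addx M (ract M x b) (ract M y b)) \<and>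
     (\<forall>b c. \<forall>x\<in>carr M. lact M b (ract M x c) = ract M (lact M b x) c) \<and>
     (\<forall>z. \<forall>x\<in>carr M. lact M (sc z) x = ract M x (sc z))"

text \<open>Elements of X_i = B \<oplus> X\<ring>_i are pairs (b, \<xi>); p_i(b,\<xi>) = b.
L(X_i): additive maps preserving B \<oplus> X\<ring>_i that commute with the left and right
B-actions (complex linearity follows, since z acts as sc z).\<close>

definition LXi :: "('b::ring_1, 'x) bimod \<Rightarrow> ('b \<times> 'x \<Rightarrow> 'b \<times> 'x) set" where
  "LXi M = {T. (\<forall>c. \<forall>\<xi>\<in>carr M. snd (T (c, \<xi>)) \<in> carr M) \<and>
     (\<forall>c c'. \<forall>\<xi>\<in>carr M. \<forall>\<xi>'\<in>carr M.
        T (c + c', addx M \<xi> \<xi>') = (fst (T (c, \<xi>)) + fst (T (c', \<xi>')), addx M (snd (T (c, \<xi>))) (snd (T (c', \<xi>'))))) \<and>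
     (\<forall>b c. \<forall>\<xi>\<in>carr M. T (b * c, lact M b \<xi>) = (b * fst (T (c, \<xi>)), lact M b (snd (T (c, \<xi>))))) \<and>
     (\<forall>b c. \<forall>\<xi>\<in>carr M. T (c * b, ract M \<xi> b) = (fst (T (c, \<xi>)) * b, ract M (snd (T (c, \<xi>))) b))}"

text \<open>X is realised as the quotient of the complex vector space of finitely supported
formal combinations of generators (c, [(i1,\<xi>1),...,(in,\<xi>n)]) (c in B, \<xi>k in X\<ring>_ik,
consecutive indices distinct), the generator standing for c in B if n = 0 and for
c\<xi>1 \<otimes>_B ... \<otimes>_B \<xi>n otherwise, modulo the relations defining the algebraic tensor
products over B (multilinearity, B-balancing) and absorption of c.\<close>

definition valid_word :: "('i \<Rightarrow> ('b, 'x) bimod) \<Rightarrow> 'i set \<Rightarrow> ('i \<times> 'x) list \<Rightarrow> bool" where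
  "valid_word M I w \<longleftrightarrow> (\<forall>p\<in>set w. fst p \<in> I \<and> snd p \<in> carr (M (fst p))) \<and>
     successively (\<lambda>p q. fst p \<noteq> fst q) w"

definition fsupp :: "('a \<Rightarrow> complex) \<Rightarrow> 'a set" where
  "fsupp f = {p. f p \<noteq> 0}"

definition FS :: "('i \<Rightarrow> ('b, 'x) bimod) \<Rightarrow> 'i set \<Rightarrow> ('b \<times> ('i \<times> 'x) list \<Rightarrow> complex) set" where
  "FS M I = {f. finite (fsupp f) \<and> (\<forall>p\<in>fsupp f. valid_word M I (snd p))}"

definition delta :: "'a \<Rightarrow> 'a \<Rightarrow> complex" where
  "delta p = (\<lambda>q. if q = p then 1 else 0)"

definition fplus :: "('a \<Rightarrow> complex) \<Rightarrow> ('a \<Rightarrow> complex) \<Rightarrow> 'a \<Rightarrow> complex" where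
  "fplus f g = (\<lambda>q. f q + g q)"

definition fminus :: "('a \<Rightarrow> complex) \<Rightarrow> ('a \<Rightarrow> complex) \<Rightarrow> 'a \<Rightarrow> complex" where
  "fminus f g = (\<lambda>q. f q - g q)"

definition fscal :: "complex \<Rightarrow> ('a \<Rightarrow> complex) \<Rightarrow> 'a \<Rightarrow> complex" where
  "fscal z f = (\<lambda>q. z * f q)"

inductive_set relsp :: "(complex \<Rightarrow> 'b::ring_1) \<Rightarrow> ('i \<Rightarrow> ('b, 'x) bimod) \<Rightarrow> 'i set
    \<Rightarrow> ('b \<times> ('i \<times> 'x) list \<Rightarrow> complex) set"
  for sc M I where
  rzero: "(\<lambda>_. 0) \<in> relsp sc M I"
| radd: "f \<in> relsp sc M I \<Longrightarrow> g \<in> relsp sc M I \<Longrightarrow> fplus f g \<in> relsp sc M I"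
| rscal: "f \<in> relsp sc M I \<Longrightarrow> fscal z f \<in> relsp sc M I"
| r1: "valid_word M I w \<Longrightarrow>
     fminus (delta (c + c', w)) (fplus (delta (c, w)) (delta (c', w))) \<in> relsp sc M I"
| r2: "valid_word M I w \<Longrightarrow>
     fminus (delta (sc z * c, w)) (fscal z (delta (c, w))) \<in> relsp sc M I"
| r3: "valid_word M I (u @ (j, x) # v) \<Longrightarrow> y \<in> carr (M j) \<Longrightarrow>
     fminus (delta (c, u @ (j, addx (M j) x y) # v))
       (fplus (delta (c, u @ (j, x) # v)) (delta (c, u @ (j, y) # v))) \<in> relsp sc M I"
| r4: "valid_word M I (u @ (j, x) # v) \<Longrightarrow>
     fminus (delta (c, u @ (j, lact (M j) (sc z) x) # v)) (fscal z (delta (c, u @ (j, x) # v)))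
       \<in> relsp sc M I"
| r5: "valid_word M I (u @ (j, x) # (k, y) # v) \<Longrightarrow>
     fminus (delta (c, u @ (j, ract (M j) x b) # (k, y) # v))
       (delta (c, u @ (j, x) # (k, lact (M k) b y) # v)) \<in> relsp sc M I"
| r6: "valid_word M I ((j, x) # v) \<Longrightarrow>
     fminus (delta (c, (j, x) # v)) (delta (1, (j, lact (M j) c x) # v)) \<in> relsp sc M I"

definition cls :: "(complex \<Rightarrow> 'b::ring_1) \<Rightarrow> ('i \<Rightarrow> ('b, 'x) bimod) \<Rightarrow> 'i set
    \<Rightarrow> ('b \<times> ('i \<times> 'x) list \<Rightarrow> complex) \<Rightarrow> ('b \<times> ('i \<times> 'x) list \<Rightarrow> complex) set" where
  "cls sc M I f = {g \<in> FS M I. fminus g f \<in> relsp sc M I}"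

definition Xsp :: "(complex \<Rightarrow> 'b::ring_1) \<Rightarrow> ('i \<Rightarrow> ('b, 'x) bimod) \<Rightarrow> 'i set
    \<Rightarrow> ('b \<times> ('i \<times> 'x) list \<Rightarrow> complex) set set" where
  "Xsp sc M I = cls sc M I ` FS M I"

definition rep :: "'f set \<Rightarrow> 'f" where
  "rep C = (SOME f. f \<in> C)"

type_synonym ('b, 'i, 'x) xop =
  "('b \<times> ('i \<times> 'x) list \<Rightarrow> complex) set \<Rightarrow> ('b \<times> ('i \<times> 'x) list \<Rightarrow> complex) set"

definition pB :: "(complex \<Rightarrow> 'b::ring_1) \<Rightarrow> ('b \<times> ('i \<times> 'x) list \<Rightarrow> complex) \<Rightarrow> 'b" where
  "pB sc f = (\<Sum>c\<in>{c. f (c, []) \<noteq> 0}. sc (f (c, [])) * c)"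

text \<open>E_{L(X)}(A) = p(A(1_B \<oplus> 0)).\<close>

definition Eop :: "(complex \<Rightarrow> 'b::ring_1) \<Rightarrow> ('i \<Rightarrow> ('b, 'x) bimod) \<Rightarrow> 'i set
    \<Rightarrow> ('b, 'i, 'x) xop \<Rightarrow> 'b" where
  "Eop sc M I A = pB sc (rep (A (cls sc M I (delta (1, [])))))"

text \<open>\<lambda>_i(T) = V_i\<inverse>(T \<otimes> I)V_i, written out on generators: a generator is identified by V_i with
(c \<oplus> 0) \<otimes> w if its word w does not start with i, and with (0 \<oplus> c\<xi>) \<otimes> rest if w = \<xi> # rest with
\<xi> in X\<ring>_i; then T \<otimes> I is applied and the result is mapped back.\<close>

definition lam_gen :: "('i \<Rightarrow> ('b::ring_1, 'x) bimod) \<Rightarrow> 'i \<Rightarrow> ('b \<times> 'x \<Rightarrow> 'b \<times> 'x)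
    \<Rightarrow> 'b \<times> ('i \<times> 'x) list \<Rightarrow> 'b \<times> ('i \<times> 'x) list \<Rightarrow> complex" where
  "lam_gen M i T p =
     (case snd p of
        (j, \<xi>) # rest \<Rightarrow>
          if j = i then
            (let r = T (0, lact (M i) (fst p) \<xi>)
             in fplus (delta (fst r, rest)) (delta (1, (i, snd r) # rest)))
          else
            (let r = T (fst p, zer (M i))
             in fplus (delta (fst r, snd p)) (delta (1, (i, snd r) # snd p)))
      | [] \<Rightarrow>
          (let r = T (fst p, zer (M i))
           in fplus (delta (fst r, [])) (delta (1, [(i, snd r)]))))"

definition liftop :: "('a \<Rightarrow> 'a \<Rightarrow> complex) \<Rightarrow> ('a \<Rightarrow> complex) \<Rightarrow> 'a \<Rightarrow> complex" where
  "liftop g f = (\<lambda>q. \<Sum>p\<in>fsupp f. f p * g p q)"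

definition lam :: "(complex \<Rightarrow> 'b::ring_1) \<Rightarrow> ('i \<Rightarrow> ('b, 'x) bimod) \<Rightarrow> 'i set \<Rightarrow> 'i
    \<Rightarrow> ('b \<times> 'x \<Rightarrow> 'b \<times> 'x) \<Rightarrow> ('b, 'i, 'x) xop" where
  "lam sc M I i T C = cls sc M I (liftop (lam_gen M i T) (rep C))"

text \<open>P_i: projection onto the summand B \<oplus> X\<ring>_i (words of length 0, or of length 1 with index i).\<close>

definition Pproj :: "(complex \<Rightarrow> 'b::ring_1) \<Rightarrow> ('i \<Rightarrow> ('b, 'x) bimod) \<Rightarrow> 'i set \<Rightarrow> 'i
    \<Rightarrow> ('b, 'i, 'x) xop" where
  "Pproj sc M I i C = cls sc M I
     (\<lambda>p. if snd p = [] \<or> (\<exists>x. snd p = [(i, x)]) then rep C p else 0)"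

datatype side = Fside | Bside

definition Alg :: "(complex \<Rightarrow> 'b::ring_1) \<Rightarrow> ('i \<Rightarrow> ('b, 'x) bimod) \<Rightarrow> 'i set \<Rightarrow> 'i \<Rightarrow> side
    \<Rightarrow> ('b, 'i, 'x) xop set" where
  "Alg sc M I i s = (case s of
      Fside \<Rightarrow> lam sc M I i ` LXi (M i)
    | Bside \<Rightarrow> (\<lambda>T. Pproj sc M I i \<circ> lam sc M I i T \<circ> Pproj sc M I i) ` LXi (M i))"

fun prodop :: "(nat \<Rightarrow> ('a \<Rightarrow> 'a)) \<Rightarrow> nat \<Rightarrow> 'a \<Rightarrow> 'a" where
  "prodop a 0 = id"
| "prodop a (Suc m) = prodop a m \<circ> a (Suc m)"

end

theory Submission
  imports Defs
begin



lemma valid_word_Cons: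
  "valid_word M I (a # w) \<longleftrightarrow> fst a \<in> I \<and> snd a \<in> carr (M (fst a)) \<and> valid_word M I w \<and>
     (w = [] \<or> fst a \<noteq> fst (hd w))"
  unfolding valid_word_def by (auto simp: successively_Cons)

lemma valid_word_Nil: "valid_word M I []"
  unfolding valid_word_def by simp

context fixes sc :: "complex \<Rightarrow> 'b::ring_1" and M :: "'i \<Rightarrow> ('b, 'x) bimod" and I :: "'i set"
begin

abbreviation "R \<equiv> relsp sc M I"
definition "eqv f g \<longleftrightarrow> fminus f g \<in> R"

lemma R_minus: "f \<in> R \<Longrightarrow> g \<in> R \<Longrightarrow> fminus f g \<in> R"
proof -
  assume "f \<in> R" "g \<in> R"
  then have "fplus f (fscal (-1) g) \<in> R" by (intro relsp.radd relsp.rscal)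
  moreover have "fplus f (fscal (-1) g) = fminus f g" unfolding fplus_def fscal_def fminus_def by auto
  ultimately show ?thesis by simp
qed

lemma eqv_refl: "eqv f f"
proof -
  have "fminus f f = (\<lambda>_. 0)" unfolding fminus_def by auto
  then show ?thesis unfolding eqv_def using relsp.rzero by metis
qed

lemma eqv_sym: "eqv f g \<Longrightarrow> eqv g f"
proof -
  assume "eqv f g"
  then have "fscal (-1) (fminus f g) \<in> R" unfolding eqv_def by (rule relsp.rscal)
  moreover have "fscal (-1) (fminus f g) = fminus g f" unfolding fscal_def fminus_def by auto
  ultimately show ?thesis unfolding eqv_def by simp
qed

lemma eqv_trans: "eqv f g \<Longrightarrow> eqv g h \<Longrightarrow> eqv f h"
proof -
  assume "eqv f g" "eqv g h"
  then have "fplus (fminus f g) (fminus g h) \<in> R" unfolding eqv_def by (rule relsp.radd)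
  moreover have "fplus (fminus f g) (fminus g h) = fminus f h" unfolding fplus_def fminus_def by auto
  ultimately show ?thesis unfolding eqv_def by simp
qed

lemma eqv_plus: "eqv f1 g1 \<Longrightarrow> eqv f2 g2 \<Longrightarrow> eqv (fplus f1 f2) (fplus g1 g2)"
proof -
  assume "eqv f1 g1" "eqv f2 g2"
  then have "fplus (fminus f1 g1) (fminus f2 g2) \<in> R" unfolding eqv_def by (rule relsp.radd)
  moreover have "fplus (fminus f1 g1) (fminus f2 g2) = fminus (fplus f1 f2) (fplus g1 g2)"
    unfolding fplus_def fminus_def by auto
  ultimately show ?thesis unfolding eqv_def by simp
qed

lemma eqv_scal: "eqv f g \<Longrightarrow> eqv (fscal z f) (fscal z g)"
proof -
  assume "eqv f g"
  then have "fscal z (fminus f g) \<in> R" unfolding eqv_def by (rule relsp.rscal)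
  moreover have "fscal z (fminus f g) = fminus (fscal z f) (fscal z g)"
    unfolding fscal_def fminus_def by (auto simp: algebra_simps)
  ultimately show ?thesis unfolding eqv_def by simp
qed

lemma eqv_cong: "f = f' \<Longrightarrow> g = g' \<Longrightarrow> eqv f' g' \<Longrightarrow> eqv f g" by simp

lemma cls_eq: "eqv f g \<Longrightarrow> cls sc M I f = cls sc M I g"
  unfolding cls_def using eqv_trans eqv_sym unfolding eqv_def[symmetric] by blast

lemma fplus_swap: "fplus (fplus a b) (fplus c d) = fplus (fplus a c) (fplus b d)"
  unfolding fplus_def by (auto simp: algebra_simps)

lemma fscal_plus: "fscal z (fplus a b) = fplus (fscal z a) (fscal z b)"
  unfolding fplus_def fscal_def by (auto simp: algebra_simps)

end



lemma fsupp_fplus: "fsupp (fplus f g) \<subseteq> fsupp f \<union> fsupp g"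
  unfolding fsupp_def fplus_def by auto
lemma fsupp_fminus: "fsupp (fminus f g) \<subseteq> fsupp f \<union> fsupp g"
  unfolding fsupp_def fminus_def by auto
lemma fsupp_fscal: "fsupp (fscal z f) \<subseteq> fsupp f"
  unfolding fsupp_def fscal_def by auto
lemma fsupp_delta: "fsupp (delta p) = {p}"
  unfolding fsupp_def delta_def by auto

lemma R_finite: "f \<in> relsp sc M I \<Longrightarrow> finite (fsupp f)"
proof (induction rule: relsp.induct)
  case rzero then show ?case by (simp add: fsupp_def)
next
  case (radd f g) then show ?case using fsupp_fplus finite_subset by (metis finite_Un)
next
  case (rscal f z) then show ?case using fsupp_fscal finite_subset by metis
qed (auto intro!: finite_subset[OF fsupp_fminus] finite_subset[OF fsupp_fplus] finite_subset[OF fsupp_fscal]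
      simp: fsupp_delta)

lemma liftop_sum: "finite S \<Longrightarrow> fsupp f \<subseteq> S \<Longrightarrow> liftop g f q = (\<Sum>p\<in>S. f p * g p q)"
  unfolding liftop_def
  by (rule sum.mono_neutral_left) (auto simp: fsupp_def)

lemma liftop_fplus: "finite (fsupp f) \<Longrightarrow> finite (fsupp h) \<Longrightarrow>
   liftop g (fplus f h) = fplus (liftop g f) (liftop g h)"
proof
  fix q assume a: "finite (fsupp f)" "finite (fsupp h)"
  let ?S = "fsupp f \<union> fsupp h"
  have "liftop g (fplus f h) q = (\<Sum>p\<in>?S. fplus f h p * g p q)"
    by (rule liftop_sum) (use a fsupp_fplus[of f h] in auto)
  also have "\<dots> = (\<Sum>p\<in>?S. f p * g p q) + (\<Sum>p\<in>?S. h p * g p q)"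
    unfolding fplus_def by (simp add: distrib_right sum.distrib)
  also have "\<dots> = liftop g f q + liftop g h q"
    using a by (simp add: liftop_sum[of ?S])
  finally show "liftop g (fplus f h) q = fplus (liftop g f) (liftop g h) q" unfolding fplus_def .
qed

lemma liftop_fminus: "finite (fsupp f) \<Longrightarrow> finite (fsupp h) \<Longrightarrow>
   liftop g (fminus f h) = fminus (liftop g f) (liftop g h)"
proof
  fix q assume a: "finite (fsupp f)" "finite (fsupp h)"
  let ?S = "fsupp f \<union> fsupp h"
  have "liftop g (fminus f h) q = (\<Sum>p\<in>?S. fminus f h p * g p q)"
    by (rule liftop_sum) (use a fsupp_fminus[of f h] in auto)
  also have "\<dots> = (\<Sum>p\<in>?S. f p * g p q) - (\<Sum>p\<in>?S. h p * g p q)"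
    unfolding fminus_def by (simp add: left_diff_distrib sum_subtractf)
  also have "\<dots> = liftop g f q - liftop g h q"
    using a by (simp add: liftop_sum[of ?S])
  finally show "liftop g (fminus f h) q = fminus (liftop g f) (liftop g h) q" unfolding fminus_def .
qed

lemma liftop_fscal: "finite (fsupp f) \<Longrightarrow> liftop g (fscal z f) = fscal z (liftop g f)"
proof
  fix q assume a: "finite (fsupp f)"
  have "liftop g (fscal z f) q = (\<Sum>p\<in>fsupp f. fscal z f p * g p q)"
    by (rule liftop_sum) (use a fsupp_fscal[of z f] in auto)
  also have "\<dots> = z * (\<Sum>p\<in>fsupp f. f p * g p q)"
    unfolding fscal_def by (simp add: sum_distrib_left mult.assoc)
  finally show "liftop g (fscal z f) q = fscal z (liftop g f) q" unfolding fscal_def liftop_def .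
qed

lemma liftop_delta: "liftop g (delta p) = g p"
  unfolding liftop_def fsupp_delta by (auto simp: delta_def)

lemma liftop_zero: "liftop g (\<lambda>_. 0) = (\<lambda>_. 0)"
  unfolding liftop_def fsupp_def by simp

lemma fin_delta: "finite (fsupp (delta p))" by (simp add: fsupp_delta)
lemma fin_fplus: "finite (fsupp f) \<Longrightarrow> finite (fsupp h) \<Longrightarrow> finite (fsupp (fplus f h))"
  by (meson finite_UnI finite_subset fsupp_fplus)
lemma fin_fscal: "finite (fsupp f) \<Longrightarrow> finite (fsupp (fscal z f))"
  by (meson finite_subset fsupp_fscal)

lemma liftop_gen3: "liftop g (fminus (delta a) (fplus (delta b) (delta c))) = fminus (g a) (fplus (g b) (g c))"
  by (simp add: liftop_fminus liftop_fplus fin_delta fin_fplus liftop_delta)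
lemma liftop_gens: "liftop g (fminus (delta a) (fscal z (delta b))) = fminus (g a) (fscal z (g b))"
  by (simp add: liftop_fminus liftop_fscal fin_delta fin_fscal liftop_delta)
lemma liftop_gen2: "liftop g (fminus (delta a) (delta b)) = fminus (g a) (g b)"
  by (simp add: liftop_fminus fin_delta liftop_delta)

context fixes sc :: "complex \<Rightarrow> 'b::ring_1" and N :: "('b,'x) bimod"
  assumes bm: "bimodule sc N"
begin
lemma bm_zer: "zer N \<in> carr N" using bm unfolding bimodule_def by simp
lemma bm_add: "x \<in> carr N \<Longrightarrow> y \<in> carr N \<Longrightarrow> addx N x y \<in> carr N" using bm unfolding bimodule_def by simp
lemma bm_lact: "x \<in> carr N \<Longrightarrow> lact N b x \<in> carr N" using bm unfolding bimodule_def by simp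
lemma bm_ract: "x \<in> carr N \<Longrightarrow> ract N x b \<in> carr N" using bm unfolding bimodule_def by simp
lemma bm_l1: "x \<in> carr N \<Longrightarrow> lact N 1 x = x" using bm unfolding bimodule_def by simp
lemma bm_lmult: "x \<in> carr N \<Longrightarrow> lact N (b * c) x = lact N b (lact N c x)" using bm unfolding bimodule_def by simp
lemma bm_ladd: "x \<in> carr N \<Longrightarrow> y \<in> carr N \<Longrightarrow> lact N b (addx N x y) = addx N (lact N b x) (lact N b y)"
  using bm unfolding bimodule_def by simp
lemma bm_radd: "x \<in> carr N \<Longrightarrow> y \<in> carr N \<Longrightarrow> ract N (addx N x y) b = addx N (ract N x b) (ract N y b)"
  using bm unfolding bimodule_def by simp
lemma bm_rl: "x \<in> carr N \<Longrightarrow> lact N b (ract N x c) = ract N (lact N b x) c"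
  using bm unfolding bimodule_def by simp

lemma bm_zero_self: "addx N (zer N) (zer N) = zer N" using bm unfolding bimodule_def by simp

lemma bm_inv0: "\<forall>x\<in>carr N. \<exists>y\<in>carr N. addx N x y = zer N" using bm unfolding bimodule_def by (elim conjE) assumption
lemma bm_inv: "x \<in> carr N \<Longrightarrow> \<exists>y\<in>carr N. addx N x y = zer N" using bm_inv0 by blast
lemma bm_assoc0: "\<forall>x\<in>carr N. \<forall>y\<in>carr N. \<forall>z\<in>carr N. addx N (addx N x y) z = addx N x (addx N y z)"
  using bm unfolding bimodule_def by (elim conjE) assumption
lemma bm_assoc: "x \<in> carr N \<Longrightarrow> y \<in> carr N \<Longrightarrow> z \<in> carr N \<Longrightarrow> addx N (addx N x y) z = addx N x (addx N y z)"
  using bm_assoc0 by blast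
lemma bm_comm0: "\<forall>x\<in>carr N. \<forall>y\<in>carr N. addx N x y = addx N y x"
  using bm unfolding bimodule_def by (elim conjE) assumption
lemma bm_comm: "x \<in> carr N \<Longrightarrow> y \<in> carr N \<Longrightarrow> addx N x y = addx N y x"
  using bm_comm0 by blast
lemma bm_zl0: "\<forall>x\<in>carr N. addx N (zer N) x = x"
  using bm unfolding bimodule_def by (elim conjE) assumption
lemma bm_zl: "x \<in> carr N \<Longrightarrow> addx N (zer N) x = x"
  using bm_zl0 by blast

lemma bm_cancel: assumes y: "y \<in> carr N" and yy: "addx N y y = y" shows "y = zer N"
proof -
  obtain y' where y': "y' \<in> carr N" "addx N y y' = zer N" using bm_inv[OF y] by blast
  have "zer N = addx N y y'" using y' by simp
  also have "\<dots> = addx N (addx N y y) y'" using yy by simp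
  also have "\<dots> = addx N y (addx N y y')" using bm_assoc y y' by blast
  also have "\<dots> = addx N y (zer N)" using y' by simp
  also have "\<dots> = y" using bm_comm bm_zl y bm_zer by metis
  finally show ?thesis by simp
qed

lemma bm_lzer: "lact N b (zer N) = zer N"
  by (rule bm_cancel) (auto simp: bm_lact bm_zer bm_ladd[symmetric] bm_zero_self)
lemma bm_rzer: "ract N (zer N) b = zer N"
  by (rule bm_cancel) (auto simp: bm_ract bm_zer bm_radd[symmetric] bm_zero_self)
end

context fixes sc :: "complex \<Rightarrow> 'b::ring_1" and N :: "('b,'x) bimod" and T
  assumes bm: "bimodule sc N" and TL: "T \<in> LXi N"
begin
lemma T_carr: "\<xi> \<in> carr N \<Longrightarrow> snd (T (c, \<xi>)) \<in> carr N" using TL unfolding LXi_def by blast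
lemma T_add: "\<xi> \<in> carr N \<Longrightarrow> \<xi>' \<in> carr N \<Longrightarrow>
  T (c + c', addx N \<xi> \<xi>') = (fst (T (c, \<xi>)) + fst (T (c', \<xi>')), addx N (snd (T (c, \<xi>))) (snd (T (c', \<xi>'))))"
  using TL unfolding LXi_def by blast
lemma T_l: "\<xi> \<in> carr N \<Longrightarrow> T (b * c, lact N b \<xi>) = (b * fst (T (c, \<xi>)), lact N b (snd (T (c, \<xi>))))"
  using TL unfolding LXi_def by blast
lemma T_r: "\<xi> \<in> carr N \<Longrightarrow> T (c * b, ract N \<xi> b) = (fst (T (c, \<xi>)) * b, ract N (snd (T (c, \<xi>))) b)"
  using TL unfolding LXi_def by blast
lemma T_l0: "T (b * c, zer N) = (b * fst (T (c, zer N)), lact N b (snd (T (c, zer N))))"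
  using T_l[OF bm_zer[OF bm], of b c] bm_lzer[OF bm] by simp
lemma T_r0: "T (c * b, zer N) = (fst (T (c, zer N)) * b, ract N (snd (T (c, zer N))) b)"
  using T_r[OF bm_zer[OF bm], of c b] bm_rzer[OF bm] by simp
lemma T_add0: "T (c + c', zer N) = (fst (T (c, zer N)) + fst (T (c', zer N)), addx N (snd (T (c, zer N))) (snd (T (c', zer N))))"
  using T_add[OF bm_zer[OF bm] bm_zer[OF bm], of c c'] bm_zero_self[OF bm] by simp
lemma T_add00: "\<xi> \<in> carr N \<Longrightarrow> \<xi>' \<in> carr N \<Longrightarrow>
  T (0, addx N \<xi> \<xi>') = (fst (T (0, \<xi>)) + fst (T (0, \<xi>')), addx N (snd (T (0, \<xi>))) (snd (T (0, \<xi>'))))"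
  using T_add[of \<xi> \<xi>' 0 0] by simp
end

definition outp :: "'i \<Rightarrow> 'b::one \<Rightarrow> 'x \<Rightarrow> ('i \<times> 'x) list \<Rightarrow> 'b \<times> ('i \<times> 'x) list \<Rightarrow> complex" where
  "outp i f s w = fplus (delta (f, w)) (delta (1, (i, s) # w))"

lemma L_noi: "w = [] \<or> fst (hd w) \<noteq> i \<Longrightarrow>
  lam_gen M i T (c, w) = outp i (fst (T (c, zer (M i)))) (snd (T (c, zer (M i)))) w"
  unfolding lam_gen_def outp_def by (cases w) (auto simp: Let_def)

lemma L_i: "lam_gen M i T (c, (i, \<xi>) # rest) = outp i (fst (T (0, lact (M i) c \<xi>))) (snd (T (0, lact (M i) c \<xi>))) rest"
  unfolding lam_gen_def outp_def by (auto simp: Let_def)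




lemma valid_swap: "valid_word M I ((k, \<xi>) # rest) \<Longrightarrow> s \<in> carr (M k) \<Longrightarrow> valid_word M I ((k, s) # rest)"
  by (simp add: valid_word_Cons)
lemma valid_tl: "valid_word M I (a # rest) \<Longrightarrow> valid_word M I rest"
  by (simp add: valid_word_Cons)
lemma valid_noi: "i \<in> I \<Longrightarrow> s \<in> carr (M i) \<Longrightarrow> valid_word M I w \<Longrightarrow> w = [] \<or> fst (hd w) \<noteq> i \<Longrightarrow>
   valid_word M I ((i, s) # w)"
  by (auto simp: valid_word_Cons)

context fixes sc :: "complex \<Rightarrow> 'b::ring_1" and M :: "'i \<Rightarrow> ('b, 'x) bimod" and I :: "'i set"
begin
abbreviation "E \<equiv> eqv sc M I"

lemma R1: "valid_word M I w \<Longrightarrow> E (delta (c + c', w)) (fplus (delta (c, w)) (delta (c', w)))"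
  unfolding eqv_def by (rule relsp.r1)
lemma R2: "valid_word M I w \<Longrightarrow> E (delta (sc z * c, w)) (fscal z (delta (c, w)))"
  unfolding eqv_def by (rule relsp.r2)
lemma R3: "valid_word M I (u @ (j, x) # v) \<Longrightarrow> y \<in> carr (M j) \<Longrightarrow>
   E (delta (c, u @ (j, addx (M j) x y) # v)) (fplus (delta (c, u @ (j, x) # v)) (delta (c, u @ (j, y) # v)))"
  unfolding eqv_def by (rule relsp.r3)
lemma R3n: "valid_word M I ((j, x) # v) \<Longrightarrow> y \<in> carr (M j) \<Longrightarrow>
   E (delta (c, (j, addx (M j) x y) # v)) (fplus (delta (c, (j, x) # v)) (delta (c, (j, y) # v)))"
  using R3[where u="[]"] by simp
lemma R3c: "valid_word M I (a # u @ (j, x) # v) \<Longrightarrow> y \<in> carr (M j) \<Longrightarrow>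
   E (delta (c, a # u @ (j, addx (M j) x y) # v)) (fplus (delta (c, a # u @ (j, x) # v)) (delta (c, a # u @ (j, y) # v)))"
  using R3[where u="a # u"] by simp
lemma R4: "valid_word M I (u @ (j, x) # v) \<Longrightarrow>
   E (delta (c, u @ (j, lact (M j) (sc z) x) # v)) (fscal z (delta (c, u @ (j, x) # v)))"
  unfolding eqv_def by (rule relsp.r4)
lemma R4n: "valid_word M I ((j, x) # v) \<Longrightarrow>
   E (delta (c, (j, lact (M j) (sc z) x) # v)) (fscal z (delta (c, (j, x) # v)))"
  using R4[where u="[]"] by simp
lemma R4c: "valid_word M I (a # u @ (j, x) # v) \<Longrightarrow>
   E (delta (c, a # u @ (j, lact (M j) (sc z) x) # v)) (fscal z (delta (c, a # u @ (j, x) # v)))"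
  using R4[where u="a # u"] by simp
lemma R5: "valid_word M I (u @ (j, x) # (k, y) # v) \<Longrightarrow>
   E (delta (c, u @ (j, ract (M j) x b) # (k, y) # v)) (delta (c, u @ (j, x) # (k, lact (M k) b y) # v))"
  unfolding eqv_def by (rule relsp.r5)
lemma R5n: "valid_word M I ((j, x) # (k, y) # v) \<Longrightarrow>
   E (delta (c, (j, ract (M j) x b) # (k, y) # v)) (delta (c, (j, x) # (k, lact (M k) b y) # v))"
  using R5[where u="[]"] by simp
lemma R5c: "valid_word M I (a # u @ (j, x) # (k, y) # v) \<Longrightarrow>
   E (delta (c, a # u @ (j, ract (M j) x b) # (k, y) # v)) (delta (c, a # u @ (j, x) # (k, lact (M k) b y) # v))"
  using R5[where u="a # u"] by simp
lemma R6: "valid_word M I ((j, x) # v) \<Longrightarrow> E (delta (c, (j, x) # v)) (delta (1, (j, lact (M j) c x) # v))"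
  unfolding eqv_def by (rule relsp.r6)

lemma E6: assumes "valid_word M I ((k, y) # v)" "y' \<in> carr (M k)" "lact (M k) f1 y = lact (M k) f2 y'"
  shows "E (delta (f1, (k, y) # v)) (delta (f2, (k, y') # v))"
proof -
  have "valid_word M I ((k, y') # v)" using assms valid_swap by metis
  then have "E (delta (f2, (k, y') # v)) (delta (1, (k, lact (M k) f1 y) # v))" using R6[of k y' v f2] assms(3) by simp
  then show ?thesis using R6[OF assms(1), of f1] eqv_trans eqv_sym by blast
qed

lemma G3: assumes h1: "E (delta (f, w)) (fplus (delta (f, w1)) (delta (f, w2)))"
  and h2: "E (delta (1, (i, s) # w)) (fplus (delta (1, (i, s) # w1)) (delta (1, (i, s) # w2)))"
  shows "E (outp i f s w) (fplus (outp i f s w1) (outp i f s w2))"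
  using eqv_plus[OF h1 h2] unfolding outp_def by (simp only: fplus_swap)
lemma Gs: assumes h1: "E (delta (f, w)) (fscal z (delta (f, w1)))"
  and h2: "E (delta (1, (i, s) # w)) (fscal z (delta (1, (i, s) # w1)))"
  shows "E (outp i f s w) (fscal z (outp i f s w1))"
  using eqv_plus[OF h1 h2] unfolding outp_def by (simp only: fscal_plus)
lemma G2: assumes h1: "E (delta (f, w)) (delta (f, w1))"
  and h2: "E (delta (1, (i, s) # w)) (delta (1, (i, s) # w1))"
  shows "E (outp i f s w) (outp i f s w1)"
  using eqv_plus[OF h1 h2] unfolding outp_def .

lemma G_split: assumes "valid_word M I ((i, s1) # w)" "s2 \<in> carr (M i)"
  shows "E (outp i (f1 + f2) (addx (M i) s1 s2) w) (fplus (outp i f1 s1 w) (outp i f2 s2 w))"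
  using eqv_plus[OF R1[OF valid_tl[OF assms(1)]] R3n[OF assms]] unfolding outp_def by (simp only: fplus_swap)
lemma G_scal: assumes "valid_word M I ((i, s) # w)"
  shows "E (outp i (sc z * f) (lact (M i) (sc z) s) w) (fscal z (outp i f s w))"
  using eqv_plus[OF R2[OF valid_tl[OF assms(1)]] R4n[OF assms]] unfolding outp_def by (simp only: fscal_plus)

end



lemma bm_ladd2: "bimodule sc N \<Longrightarrow> x \<in> carr N \<Longrightarrow> lact N (b + c) x = addx N (lact N b x) (lact N c x)"
  unfolding bimodule_def by simp

context fixes sc :: "complex \<Rightarrow> 'b::ring_1" and M :: "'i \<Rightarrow> ('b, 'x) bimod" and I :: "'i set"
  and i :: 'i and T :: "'b \<times> 'x \<Rightarrow> 'b \<times> 'x"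
  assumes ca: "complex_alg sc" and bmI: "\<forall>j\<in>I. bimodule sc (M j)" and iI: "i \<in> I" and TL: "T \<in> LXi (M i)"
begin
abbreviation "L \<equiv> lam_gen M i T"

lemma bmi: "bimodule sc (M i)" using bmI iI by blast
lemma bmj: "valid_word M I ((j, x) # v) \<Longrightarrow> bimodule sc (M j)" using bmI by (simp add: valid_word_Cons)
lemma xj: "valid_word M I ((j, x) # v) \<Longrightarrow> x \<in> carr (M j)" by (simp add: valid_word_Cons)

lemma s0: "snd (T (c, zer (M i))) \<in> carr (M i)" using T_carr[OF bmi TL bm_zer[OF bmi]] .
lemma sx: "x \<in> carr (M i) \<Longrightarrow> snd (T (c, x)) \<in> carr (M i)" using T_carr[OF bmi TL] .

lemma L_r1: assumes v: "valid_word M I w" shows "E sc M I (L (c + c', w)) (fplus (L (c, w)) (L (c', w)))"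
proof (cases "w = [] \<or> fst (hd w) \<noteq> i")
  case True
  have vw: "valid_word M I ((i, snd (T (c, zer (M i)))) # w)" using valid_noi[OF iI s0 v True] .
  show ?thesis using G_split[OF vw s0, of sc "fst (T (c, zer (M i)))" "fst (T (c', zer (M i)))" c']
    by (simp add: L_noi[OF True] T_add0[OF bmi TL])
next
  case False
  then obtain \<xi> rest where w: "w = (i, \<xi>) # rest" by (cases w) auto
  have xi: "\<xi> \<in> carr (M i)" using v w by (simp add: valid_word_Cons)
  have l: "lact (M i) (c + c') \<xi> = addx (M i) (lact (M i) c \<xi>) (lact (M i) c' \<xi>)" using bm_ladd2[OF bmi xi] .
  have vw: "valid_word M I ((i, snd (T (0, lact (M i) c \<xi>))) # rest)"
    using valid_swap v w sx bm_lact[OF bmi xi] by metis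
  show ?thesis using G_split[OF vw sx[OF bm_lact[OF bmi xi]]]
    by (simp add: w L_i l T_add00[OF bmi TL bm_lact[OF bmi xi] bm_lact[OF bmi xi]])
qed

lemma L_r2: assumes v: "valid_word M I w" shows "E sc M I (L (sc z * c, w)) (fscal z (L (c, w)))"
proof (cases "w = [] \<or> fst (hd w) \<noteq> i")
  case True
  have vw: "valid_word M I ((i, snd (T (c, zer (M i)))) # w)" using valid_noi[OF iI s0 v True] .
  show ?thesis using G_scal[OF vw, where z=z and f="fst (T (c, zer (M i)))"]
    by (simp add: L_noi[OF True] T_l0[OF bmi TL])
next
  case False
  then obtain \<xi> rest where w: "w = (i, \<xi>) # rest" by (cases w) auto
  have xi: "\<xi> \<in> carr (M i)" using v w by (simp add: valid_word_Cons)
  let ?y = "lact (M i) c \<xi>"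
  have y: "?y \<in> carr (M i)" using bm_lact[OF bmi xi] .
  have l: "lact (M i) (sc z * c) \<xi> = lact (M i) (sc z) ?y" using bm_lmult[OF bmi xi] .
  have t: "T (0, lact (M i) (sc z) ?y) = (sc z * fst (T (0, ?y)), lact (M i) (sc z) (snd (T (0, ?y))))"
    using T_l[OF bmi TL y, of "sc z" 0] by simp
  have vw: "valid_word M I ((i, snd (T (0, ?y))) # rest)"
    using valid_swap v w sx y by metis
  show ?thesis using G_scal[OF vw, where z=z and f="fst (T (0, ?y))"]
    by (simp add: w L_i l t)
qed

lemma L_r3: assumes v: "valid_word M I (u @ (j, x) # v)" and y: "y \<in> carr (M j)"
  shows "E sc M I (L (c, u @ (j, addx (M j) x y) # v)) (fplus (L (c, u @ (j, x) # v)) (L (c, u @ (j, y) # v)))"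
proof (cases u)
  case Nil
  show ?thesis
  proof (cases "j = i")
    case True
    have x: "x \<in> carr (M i)" using v Nil True by (simp add: valid_word_Cons)
    have y': "y \<in> carr (M i)" using y True by simp
    have l: "lact (M i) c (addx (M i) x y) = addx (M i) (lact (M i) c x) (lact (M i) c y)"
      using bm_ladd[OF bmi x y'] .
    have vw: "valid_word M I ((i, snd (T (0, lact (M i) c x))) # v)"
      using valid_swap v Nil True sx bm_lact[OF bmi x] by (metis append_Nil)
    show ?thesis using G_split[OF vw sx[OF bm_lact[OF bmi y']]]
      by (simp add: Nil True L_i l T_add00[OF bmi TL bm_lact[OF bmi x] bm_lact[OF bmi y']])
  next
    case False
    let ?f = "fst (T (c, zer (M i)))" and ?s = "snd (T (c, zer (M i)))"
    have v0: "valid_word M I ((j, x) # v)" using v Nil by simp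
    have vw: "valid_word M I ((i, ?s) # (j, x) # v)" using valid_noi[OF iI s0 v0] False by simp
    have e1: "E sc M I (delta (?f, (j, addx (M j) x y) # v)) (fplus (delta (?f, (j, x) # v)) (delta (?f, (j, y) # v)))"
      using R3[OF iffD2[OF arg_cong[where f="valid_word M I"] v0] y, where u="[]"] by simp
    have e2: "E sc M I (delta (1, (i, ?s) # (j, addx (M j) x y) # v)) (fplus (delta (1, (i, ?s) # (j, x) # v)) (delta (1, (i, ?s) # (j, y) # v)))"
      using R3[OF iffD2[OF arg_cong[where f="valid_word M I"] vw] y, where u="[(i, ?s)]"] by simp
    show ?thesis using G3[OF e1 e2] False by (simp add: Nil L_noi)
  qed
next
  case (Cons a u')
  obtain k \<xi> where a: "a = (k, \<xi>)" by (cases a)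
  show ?thesis
  proof (cases "k = i")
    case True
    have xi: "\<xi> \<in> carr (M i)" using v Cons a True by (simp add: valid_word_Cons)
    let ?f = "fst (T (0, lact (M i) c \<xi>))" and ?s = "snd (T (0, lact (M i) c \<xi>))"
    have v1: "valid_word M I (u' @ (j, x) # v)" using v Cons by (simp add: valid_word_Cons)
    have vw: "valid_word M I ((i, ?s) # u' @ (j, x) # v)" using valid_swap[of M I i \<xi> "u' @ (j, x) # v" ?s] v Cons a True
      sx bm_lact[OF bmi xi] by simp
    have e1: "E sc M I (delta (?f, u' @ (j, addx (M j) x y) # v)) (fplus (delta (?f, u' @ (j, x) # v)) (delta (?f, u' @ (j, y) # v)))"
      using R3[OF v1 y] .
    have e2: "E sc M I (delta (1, (i, ?s) # u' @ (j, addx (M j) x y) # v)) (fplus (delta (1, (i, ?s) # u' @ (j, x) # v)) (delta (1, (i, ?s) # u' @ (j, y) # v)))"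
      using R3[OF iffD2[OF arg_cong[where f="valid_word M I"] vw] y, where u="(i, ?s) # u'"] by simp
    show ?thesis using G3[OF e1 e2] by (simp add: Cons a True L_i)
  next
    case False
    let ?f = "fst (T (c, zer (M i)))" and ?s = "snd (T (c, zer (M i)))"
    have vw: "valid_word M I ((i, ?s) # u @ (j, x) # v)" using valid_noi[OF iI s0 v] False Cons a by simp
    have e1: "E sc M I (delta (?f, u @ (j, addx (M j) x y) # v)) (fplus (delta (?f, u @ (j, x) # v)) (delta (?f, u @ (j, y) # v)))"
      using R3[OF v y] .
    have e2: "E sc M I (delta (1, (i, ?s) # u @ (j, addx (M j) x y) # v)) (fplus (delta (1, (i, ?s) # u @ (j, x) # v)) (delta (1, (i, ?s) # u @ (j, y) # v)))"
      using R3[OF iffD2[OF arg_cong[where f="valid_word M I"] vw] y, where u="(i, ?s) # u"] by simp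
    have nn: "\<And>W. fst (hd (u @ W)) \<noteq> i" using Cons a False by simp
    show ?thesis using G3[OF e1 e2] by (simp add: L_noi nn)
  qed
qed

lemma central: "sc z * c = c * sc z" using ca unfolding complex_alg_def by simp

lemma L_r4: assumes v: "valid_word M I (u @ (j, x) # v)"
  shows "E sc M I (L (c, u @ (j, lact (M j) (sc z) x) # v)) (fscal z (L (c, u @ (j, x) # v)))"
proof (cases u)
  case Nil
  show ?thesis
  proof (cases "j = i")
    case True
    have x: "x \<in> carr (M i)" using v Nil True by (simp add: valid_word_Cons)
    let ?y = "lact (M i) c x"
    have y: "?y \<in> carr (M i)" using bm_lact[OF bmi x] .
    have l: "lact (M i) c (lact (M i) (sc z) x) = lact (M i) (sc z) ?y"
      using bm_lmult[OF bmi x, of c "sc z"] bm_lmult[OF bmi x, of "sc z" c] central by simp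
    have t: "T (0, lact (M i) (sc z) ?y) = (sc z * fst (T (0, ?y)), lact (M i) (sc z) (snd (T (0, ?y))))"
      using T_l[OF bmi TL y, of "sc z" 0] by simp
    have vw: "valid_word M I ((i, snd (T (0, ?y))) # v)"
      using valid_swap v Nil True sx y by (metis append_Nil)
    show ?thesis using G_scal[OF vw, where z=z and f="fst (T (0, ?y))"]
      by (simp add: Nil True L_i l t)
  next
    case False
    let ?f = "fst (T (c, zer (M i)))" and ?s = "snd (T (c, zer (M i)))"
    have v0: "valid_word M I ((j, x) # v)" using v Nil by simp
    have vw: "valid_word M I ((i, ?s) # (j, x) # v)" using valid_noi[OF iI s0 v0] False by simp
    have e1: "E sc M I (delta (?f, (j, lact (M j) (sc z) x) # v)) (fscal z (delta (?f, (j, x) # v)))"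
      using R4[OF iffD2[OF arg_cong[where f="valid_word M I"] v0], where u="[]"] by simp
    have e2: "E sc M I (delta (1, (i, ?s) # (j, lact (M j) (sc z) x) # v)) (fscal z (delta (1, (i, ?s) # (j, x) # v)))"
      using R4[OF iffD2[OF arg_cong[where f="valid_word M I"] vw], where u="[(i, ?s)]"] by simp
    show ?thesis using Gs[OF e1 e2] False by (simp add: Nil L_noi)
  qed
next
  case (Cons a u')
  obtain k \<xi> where a: "a = (k, \<xi>)" by (cases a)
  show ?thesis
  proof (cases "k = i")
    case True
    have xi: "\<xi> \<in> carr (M i)" using v Cons a True by (simp add: valid_word_Cons)
    let ?f = "fst (T (0, lact (M i) c \<xi>))" and ?s = "snd (T (0, lact (M i) c \<xi>))"
    have v1: "valid_word M I (u' @ (j, x) # v)" using v Cons by (simp add: valid_word_Cons)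
    have vw: "valid_word M I ((i, ?s) # u' @ (j, x) # v)" using valid_swap[of M I i \<xi> "u' @ (j, x) # v" ?s] v Cons a True
      sx bm_lact[OF bmi xi] by simp
    have e1: "E sc M I (delta (?f, u' @ (j, lact (M j) (sc z) x) # v)) (fscal z (delta (?f, u' @ (j, x) # v)))"
      using R4[OF v1] .
    have e2: "E sc M I (delta (1, (i, ?s) # u' @ (j, lact (M j) (sc z) x) # v)) (fscal z (delta (1, (i, ?s) # u' @ (j, x) # v)))"
      using R4[OF iffD2[OF arg_cong[where f="valid_word M I"] vw], where u="(i, ?s) # u'"] by simp
    show ?thesis using Gs[OF e1 e2] by (simp add: Cons a True L_i)
  next
    case False
    let ?f = "fst (T (c, zer (M i)))" and ?s = "snd (T (c, zer (M i)))"
    have vw: "valid_word M I ((i, ?s) # u @ (j, x) # v)" using valid_noi[OF iI s0 v] False Cons a by simp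
    have e1: "E sc M I (delta (?f, u @ (j, lact (M j) (sc z) x) # v)) (fscal z (delta (?f, u @ (j, x) # v)))"
      using R4[OF v] .
    have e2: "E sc M I (delta (1, (i, ?s) # u @ (j, lact (M j) (sc z) x) # v)) (fscal z (delta (1, (i, ?s) # u @ (j, x) # v)))"
      using R4[OF iffD2[OF arg_cong[where f="valid_word M I"] vw], where u="(i, ?s) # u"] by simp
    have nn: "\<And>W. fst (hd (u @ W)) \<noteq> i" using Cons a False by simp
    show ?thesis using Gs[OF e1 e2] by (simp add: L_noi nn)
  qed
qed

lemma L_r5: assumes v: "valid_word M I (u @ (j, x) # (k, y) # v)"
  shows "E sc M I (L (c, u @ (j, ract (M j) x b) # (k, y) # v)) (L (c, u @ (j, x) # (k, lact (M k) b y) # v))"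
proof (cases u)
  case Nil
  show ?thesis
  proof (cases "j = i")
    case True
    have x: "x \<in> carr (M i)" using v Nil True by (simp add: valid_word_Cons)
    let ?y = "lact (M i) c x"
    let ?f = "fst (T (0, ?y))" and ?s = "snd (T (0, ?y))"
    have y: "?y \<in> carr (M i)" using bm_lact[OF bmi x] .
    have l: "lact (M i) c (ract (M i) x b) = ract (M i) ?y b" using bm_rl[OF bmi x] .
    have t: "T (0, ract (M i) ?y b) = (?f * b, ract (M i) ?s b)"
      using T_r[OF bmi TL y, of 0 b] by simp
    have vky: "valid_word M I ((k, y) # v)" using v Nil by (simp add: valid_word_Cons)
    have bk: "bimodule sc (M k)" using bmj[OF vky] .
    have yk: "y \<in> carr (M k)" using xj[OF vky] .
    have e1: "E sc M I (delta (?f * b, (k, y) # v)) (delta (?f, (k, lact (M k) b y) # v))"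
      by (rule E6[OF vky bm_lact[OF bk yk]]) (simp add: bm_lmult[OF bk yk])
    have vw: "valid_word M I ((i, ?s) # (k, y) # v)"
      using valid_swap v Nil True sx y by (metis append_Nil)
    have e2: "E sc M I (delta (1, (i, ract (M i) ?s b) # (k, y) # v)) (delta (1, (i, ?s) # (k, lact (M k) b y) # v))"
      using R5n[OF vw] .
    show ?thesis using eqv_plus[OF e1 e2] by (simp add: Nil True L_i l t outp_def)
  next
    case False
    let ?f = "fst (T (c, zer (M i)))" and ?s = "snd (T (c, zer (M i)))"
    have v0: "valid_word M I ((j, x) # (k, y) # v)" using v Nil by simp
    have vw: "valid_word M I ((i, ?s) # (j, x) # (k, y) # v)" using valid_noi[OF iI s0 v0] False by simp
    have e1: "E sc M I (delta (?f, (j, ract (M j) x b) # (k, y) # v)) (delta (?f, (j, x) # (k, lact (M k) b y) # v))"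
      using R5n[OF v0] .
    have e2: "E sc M I (delta (1, (i, ?s) # (j, ract (M j) x b) # (k, y) # v)) (delta (1, (i, ?s) # (j, x) # (k, lact (M k) b y) # v))"
      using R5c[OF iffD2[OF arg_cong[where f="valid_word M I"] vw], where u="[]"] by simp
    show ?thesis using G2[OF e1 e2] False by (simp add: Nil L_noi)
  qed
next
  case (Cons a u')
  obtain k' \<xi> where a: "a = (k', \<xi>)" by (cases a)
  show ?thesis
  proof (cases "k' = i")
    case True
    have xi: "\<xi> \<in> carr (M i)" using v Cons a True by (simp add: valid_word_Cons)
    let ?f = "fst (T (0, lact (M i) c \<xi>))" and ?s = "snd (T (0, lact (M i) c \<xi>))"
    have v1: "valid_word M I (u' @ (j, x) # (k, y) # v)" using v Cons by (simp add: valid_word_Cons)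
    have vw: "valid_word M I ((i, ?s) # u' @ (j, x) # (k, y) # v)"
      using valid_swap[of M I i \<xi> "u' @ (j, x) # (k, y) # v" ?s] v Cons a True sx bm_lact[OF bmi xi] by simp
    have e1: "E sc M I (delta (?f, u' @ (j, ract (M j) x b) # (k, y) # v)) (delta (?f, u' @ (j, x) # (k, lact (M k) b y) # v))"
      using R5[OF v1] .
    have e2: "E sc M I (delta (1, (i, ?s) # u' @ (j, ract (M j) x b) # (k, y) # v)) (delta (1, (i, ?s) # u' @ (j, x) # (k, lact (M k) b y) # v))"
      using R5c[OF vw] .
    show ?thesis using G2[OF e1 e2] by (simp add: Cons a True L_i)
  next
    case False
    let ?f = "fst (T (c, zer (M i)))" and ?s = "snd (T (c, zer (M i)))"
    have vw: "valid_word M I ((i, ?s) # u @ (j, x) # (k, y) # v)" using valid_noi[OF iI s0 v] False Cons a by simp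
    have e1: "E sc M I (delta (?f, u @ (j, ract (M j) x b) # (k, y) # v)) (delta (?f, u @ (j, x) # (k, lact (M k) b y) # v))"
      using R5[OF v] .
    have e2: "E sc M I (delta (1, (i, ?s) # u @ (j, ract (M j) x b) # (k, y) # v)) (delta (1, (i, ?s) # u @ (j, x) # (k, lact (M k) b y) # v))"
      using R5c[OF vw] .
    have nn: "\<And>W. fst (hd (u @ W)) \<noteq> i" using Cons a False by simp
    show ?thesis using G2[OF e1 e2] by (simp add: L_noi nn)
  qed
qed

lemma L_r6: assumes v: "valid_word M I ((j, x) # v)"
  shows "E sc M I (L (c, (j, x) # v)) (L (1, (j, lact (M j) c x) # v))"
proof (cases "j = i")
  case True
  have x: "x \<in> carr (M i)" using v True by (simp add: valid_word_Cons)
  show ?thesis using eqv_refl by (simp add: True L_i bm_l1[OF bmi bm_lact[OF bmi x]])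
next
  case False
  let ?f = "fst (T (1, zer (M i)))" and ?s = "snd (T (1, zer (M i)))"
  have bj: "bimodule sc (M j)" using bmj[OF v] .
  have xj': "x \<in> carr (M j)" using xj[OF v] .
  have t: "T (c, zer (M i)) = (?f * c, ract (M i) ?s c)" using T_r0[OF bmi TL, of 1 c] by simp
  have e1: "E sc M I (delta (?f * c, (j, x) # v)) (delta (?f, (j, lact (M j) c x) # v))"
    by (rule E6[OF v bm_lact[OF bj xj']]) (simp add: bm_lmult[OF bj xj'])
  have vw: "valid_word M I ((i, ?s) # (j, x) # v)" using valid_noi[OF iI s0 v] False by simp
  have e2: "E sc M I (delta (1, (i, ract (M i) ?s c) # (j, x) # v)) (delta (1, (i, ?s) # (j, lact (M j) c x) # v))"
    using R5n[OF vw] .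
  show ?thesis using eqv_plus[OF e1 e2] False by (simp add: L_noi t outp_def)
qed

end



definition projf :: "'i \<Rightarrow> ('b \<times> ('i \<times> 'x) list \<Rightarrow> complex) \<Rightarrow> 'b \<times> ('i \<times> 'x) list \<Rightarrow> complex" where
  "projf i f = (\<lambda>p. if snd p = [] \<or> (\<exists>x. snd p = [(i, x)]) then f p else 0)"

lemma Pproj_eq: "Pproj sc M I i C = cls sc M I (projf i (rep C))"
  unfolding Pproj_def projf_def ..

lemma projf_fplus: "projf i (fplus f g) = fplus (projf i f) (projf i g)"
  unfolding projf_def fplus_def by auto
lemma projf_fminus: "projf i (fminus f g) = fminus (projf i f) (projf i g)"
  unfolding projf_def fminus_def by auto
lemma projf_fscal: "projf i (fscal z f) = fscal z (projf i f)"
  unfolding projf_def fscal_def by auto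

lemma proj_gen: assumes "\<forall>p\<in>fsupp G. (snd p = [] \<or> (\<exists>x. snd p = [(i, x)])) = k" and "G \<in> relsp sc M I"
  shows "projf i G \<in> relsp sc M I"
proof (cases k)
  case True
  have "projf i G = G"
  proof
    fix p
    show "projf i G p = G p"
    proof (cases "G p = 0")
      case False
      then have "p \<in> fsupp G" unfolding fsupp_def by simp
      then have "snd p = [] \<or> (\<exists>x. snd p = [(i, x)])" using assms(1) \<open>k\<close> by blast
      then show ?thesis unfolding projf_def by simp
    qed (simp add: projf_def)
  qed
  then show ?thesis using assms(2) by simp
next
  case False
  have "projf i G = (\<lambda>_. 0)"
  proof
    fix p
    show "projf i G p = 0"
    proof (cases "G p = 0")
      case False
      then have "p \<in> fsupp G" unfolding fsupp_def by simp
      then have "\<not> (snd p = [] \<or> (\<exists>x. snd p = [(i, x)]))" using assms(1) \<open>\<not> k\<close> by blast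
      then show ?thesis unfolding projf_def by simp
    qed (simp add: projf_def)
  qed
  then show ?thesis by (simp add: relsp.rzero)
qed

lemma fs3: "fsupp (fminus (delta a) (fplus (delta b) (delta c))) \<subseteq> {a, b, c}"
  by (auto simp: fsupp_def fminus_def fplus_def delta_def)
lemma fss: "fsupp (fminus (delta a) (fscal z (delta b))) \<subseteq> {a, b}"
  by (auto simp: fsupp_def fminus_def fscal_def delta_def)
lemma fs2: "fsupp (fminus (delta a) (delta b)) \<subseteq> {a, b}"
  by (auto simp: fsupp_def fminus_def delta_def)

lemma ball_sub: "fsupp G \<subseteq> S \<Longrightarrow> \<forall>p\<in>S. P p \<Longrightarrow> \<forall>p\<in>fsupp G. P p" by blast

definition keepw :: "'i \<Rightarrow> ('i \<times> 'x) list \<Rightarrow> bool" where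
  "keepw i w \<longleftrightarrow> w = [] \<or> (\<exists>x. w = [(i, x)])"

lemma keep_app: "keepw i (u @ (j, x) # v) = (u = [] \<and> v = [] \<and> j = i)"
  unfolding keepw_def by (cases u) auto
lemma keep_app2: "keepw i (u @ (j, x) # (k, y) # v) = False"
  unfolding keepw_def by (cases u) auto
lemma keep_cons: "keepw i ((j, x) # v) = (v = [] \<and> j = i)"
  unfolding keepw_def by auto

lemma proj_gen3: assumes "keepw i (snd a) = k" "keepw i (snd b) = k" "keepw i (snd c) = k"
  and "fminus (delta a) (fplus (delta b) (delta c)) \<in> relsp sc M I"
  shows "projf i (fminus (delta a) (fplus (delta b) (delta c))) \<in> relsp sc M I"
  by (rule proj_gen[OF ball_sub[OF fs3] assms(4), where k=k]) (use assms in \<open>simp add: keepw_def\<close>)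
lemma proj_gens: assumes "keepw i (snd a) = k" "keepw i (snd b) = k"
  and "fminus (delta a) (fscal z (delta b)) \<in> relsp sc M I"
  shows "projf i (fminus (delta a) (fscal z (delta b))) \<in> relsp sc M I"
  by (rule proj_gen[OF ball_sub[OF fss] assms(3), where k=k]) (use assms in \<open>simp add: keepw_def\<close>)
lemma proj_gen2: assumes "keepw i (snd a) = k" "keepw i (snd b) = k"
  and "fminus (delta a) (delta b) \<in> relsp sc M I"
  shows "projf i (fminus (delta a) (delta b)) \<in> relsp sc M I"
  by (rule proj_gen[OF ball_sub[OF fs2] assms(3), where k=k]) (use assms in \<open>simp add: keepw_def\<close>)

lemma proj_R: "f \<in> relsp sc M I \<Longrightarrow> projf i f \<in> relsp sc M I"
proof (induction rule: relsp.induct)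
  case rzero
  show ?case unfolding projf_def by (simp add: relsp.rzero)
next
  case (radd f g) then show ?case by (simp add: projf_fplus relsp.radd)
next
  case (rscal f z) then show ?case by (simp add: projf_fscal relsp.rscal)
next
  case (r1 w c c')
  show ?case by (rule proj_gen3[OF _ _ _ relsp.r1[OF r1]]) simp_all
next
  case (r2 w z c)
  show ?case by (rule proj_gens[OF _ _ relsp.r2[OF r2]]) simp_all
next
  case (r3 u j x v y c)
  show ?case by (rule proj_gen3[OF _ _ _ relsp.r3[OF r3]]) (simp_all only: snd_conv keep_app)
next
  case (r4 u j x v c z)
  show ?case by (rule proj_gens[OF _ _ relsp.r4[OF r4]]) (simp_all only: snd_conv keep_app)
next
  case (r5 u j x k y v c b)
  show ?case by (rule proj_gen2[OF _ _ relsp.r5[OF r5]]) (simp_all only: snd_conv keep_app2)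
next
  case (r6 j x v c)
  show ?case by (rule proj_gen2[OF _ _ relsp.r6[OF r6]]) (simp_all only: snd_conv keep_cons)
qed




context fixes sc :: "complex \<Rightarrow> 'b::ring_1" and M :: "'i \<Rightarrow> ('b, 'x) bimod" and I :: "'i set"
  and i :: 'i and T :: "'b \<times> 'x \<Rightarrow> 'b \<times> 'x"
  assumes ca: "complex_alg sc" and bmI: "\<forall>j\<in>I. bimodule sc (M j)" and iI: "i \<in> I" and TL: "T \<in> LXi (M i)"
begin

lemma lift_R: "f \<in> relsp sc M I \<Longrightarrow> liftop (lam_gen M i T) f \<in> relsp sc M I"
proof (induction rule: relsp.induct)
  case rzero
  show ?case by (simp add: liftop_zero relsp.rzero)
next
  case (radd f g) then show ?case by (simp add: liftop_fplus R_finite relsp.radd)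
next
  case (rscal f z) then show ?case by (simp add: liftop_fscal R_finite relsp.rscal)
next
  case (r1 w c c')
  show ?case using L_r1[OF ca bmI iI TL r1, of c c'] unfolding liftop_gen3 eqv_def .
next
  case (r2 w z c)
  show ?case using L_r2[OF ca bmI iI TL r2, of z c] unfolding liftop_gens eqv_def .
next
  case (r3 u j x v y c)
  show ?case using L_r3[OF ca bmI iI TL r3, of c] unfolding liftop_gen3 eqv_def .
next
  case (r4 u j x v c z)
  show ?case using L_r4[OF ca bmI iI TL r4, of c z] unfolding liftop_gens eqv_def .
next
  case (r5 u j x k y v c b)
  show ?case using L_r5[OF ca bmI iI TL r5, of c b] unfolding liftop_gen2 eqv_def .
next
  case (r6 j x v c)
  show ?case using L_r6[OF ca bmI iI TL r6, of c] unfolding liftop_gen2 eqv_def .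
qed

lemma rep_in: "f \<in> FS M I \<Longrightarrow> rep (cls sc M I f) \<in> cls sc M I f"
proof -
  assume f: "f \<in> FS M I"
  have "f \<in> cls sc M I f" unfolding cls_def using f eqv_refl[of sc M I f] unfolding eqv_def by simp
  then show ?thesis unfolding rep_def by (rule someI[where x=f])
qed

lemma key: "Pproj sc M I i (lam sc M I i T (Pproj sc M I i (cls sc M I (delta (1, [])))))
   = lam sc M I i T (cls sc M I (delta (1, [])))"
proof -
  let ?d = "delta (1::'b, [] :: ('i \<times> 'x) list)"
  let ?C0 = "cls sc M I ?d"
  let ?L = "lam_gen M i T"
  have dFS: "?d \<in> FS M I" unfolding FS_def by (simp add: fsupp_delta valid_word_Nil)
  define g where "g = rep ?C0"
  have g: "g \<in> FS M I" "fminus g ?d \<in> relsp sc M I" using rep_in[OF dFS] unfolding g_def cls_def by auto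
  have gfin: "finite (fsupp g)" using g(1) unfolding FS_def by simp
  have pd: "projf i ?d = ?d" unfolding projf_def delta_def by auto
  have "eqv sc M I (projf i g) ?d"
    using proj_R[OF g(2), of i] unfolding eqv_def projf_fminus pd .
  then have P0: "Pproj sc M I i ?C0 = ?C0" unfolding Pproj_eq g_def[symmetric] by (rule cls_eq)
  define h where "h = ?L (1, [])"
  have "eqv sc M I (liftop ?L g) h"
    using lift_R[OF g(2)] unfolding eqv_def liftop_fminus[OF gfin fin_delta] liftop_delta h_def .
  then have Lam: "lam sc M I i T ?C0 = cls sc M I h" unfolding lam_def g_def[symmetric] by (rule cls_eq)
  have s0': "snd (T (1, zer (M i))) \<in> carr (M i)" using s0[OF ca bmI iI TL] .
  have h_eq: "h = outp i (fst (T (1, zer (M i)))) (snd (T (1, zer (M i)))) []"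
    unfolding h_def by (rule L_noi) simp
  have hFS: "h \<in> FS M I"
  proof -
    have "fsupp h \<subseteq> {(fst (T (1, zer (M i))), []), (1, [(i, snd (T (1, zer (M i))))])}"
      unfolding h_eq outp_def by (auto simp: fsupp_def fplus_def delta_def)
    moreover have "valid_word M I [(i, snd (T (1, zer (M i))))]"
      using iI s0' by (simp add: valid_word_Cons valid_word_Nil)
    ultimately show ?thesis unfolding FS_def using valid_word_Nil finite_subset by fastforce
  qed
  have ph: "projf i h = h" unfolding h_eq outp_def projf_def fplus_def delta_def by (auto intro!: ext)
  define r where "r = rep (cls sc M I h)"
  have r: "fminus r h \<in> relsp sc M I" using rep_in[OF hFS] unfolding r_def cls_def by auto
  have "eqv sc M I (projf i r) h"
    using proj_R[OF r, of i] unfolding eqv_def projf_fminus ph .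
  then have "Pproj sc M I i (cls sc M I h) = cls sc M I h" unfolding Pproj_eq r_def[symmetric] by (rule cls_eq)
  then show ?thesis using P0 Lam by simp
qed

end

theorem lemma4p8:
  fixes sc :: "complex \<Rightarrow> 'b::ring_1"
    and M :: "'i \<Rightarrow> ('b, 'x) bimod"
    and I :: "'i set"
    and n :: nat
    and \<omega> :: "nat \<Rightarrow> 'i"
    and \<chi> :: "nat \<Rightarrow> side"
    and a :: "nat \<Rightarrow> ('b, 'i, 'x) xop"
  assumes "complex_alg sc"
    and "\<forall>i\<in>I. bimodule sc (M i)"
    and "1 \<le> n"
    and "\<forall>k\<in>{1..n}. \<omega> k \<in> I"
    and "\<forall>k\<in>{1..n}. a k \<in> Alg sc M I (\<omega> k) (\<chi> k)"
    and "\<chi> n = Bside"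
  shows "\<exists>T\<in>Alg sc M I (\<omega> n) Fside.
           Eop sc M I (prodop a n) = Eop sc M I (prodop a (n - 1) \<circ> T)"
proof -
  have nn: "n \<in> {1..n}" using assms(3) by simp
  have iI: "\<omega> n \<in> I" using assms(4) nn by blast
  have "a n \<in> Alg sc M I (\<omega> n) Bside" using assms(5) nn assms(6) by metis
  then obtain T where TL: "T \<in> LXi (M (\<omega> n))"
    and an: "a n = Pproj sc M I (\<omega> n) \<circ> lam sc M I (\<omega> n) T \<circ> Pproj sc M I (\<omega> n)"
    unfolding Alg_def by auto
  have W: "lam sc M I (\<omega> n) T \<in> Alg sc M I (\<omega> n) Fside" unfolding Alg_def using TL by simp
  have sn: "n = Suc (n - 1)" using assms(3) by simp
  have "prodop a (Suc (n - 1)) = prodop a (n - 1) \<circ> a (Suc (n - 1))" by simp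
  then have pa: "prodop a n = prodop a (n - 1) \<circ> a n" using sn by metis
  have k: "a n (cls sc M I (delta (1, []))) = lam sc M I (\<omega> n) T (cls sc M I (delta (1, [])))"
    using key[OF assms(1) assms(2) iI TL] an by simp
  have "Eop sc M I (prodop a n) = Eop sc M I (prodop a (n - 1) \<circ> lam sc M I (\<omega> n) T)"
    unfolding Eop_def pa using k by simp
  then show ?thesis using W by blast
qed


end
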